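(* Let $\kappa\ge\aleph_0$ be a cardinal, let $P$ be a $d$-dimensional $k$-template, and let $X_0,X_1,\dots,X_{d-1}$ be sets with $|X_i|\ge\kappa^{+i}$ for each $i<d$. Let $X=X_0\times X_1\times\cdots\times X_{d-1}$. Then $\chi(L(X,P))\ge\kappa$.
   Context: Here $1\le d<\omega$, $2\le k<\omega$. A $d$-dimensional $k$-template is a set $P$ of $d$-tuples with $|P|=k$. If $P,Q$ are $d$-dimensional templates, $Q$ is a homomorphic image of $P$ if there is a surjection $f:P\to Q$ such that for all $x,y\in P$ and $i<d$, $x_i=y_i$ implies $f(x)_i=f(y)_i$. For $X=X_0\times\cdots\times X_{d-1}$, $L(X,P)$ is the $k$-hypergraph with vertex set $X$ whose edges are the $k$-templates $Q\subseteq X$ that are homomorphic images of $P$. $\chi$ is the chromatic number (least cardinal number of colors in a vertex coloring not constant on any edge). $\kappa^+$ is the successor cardinal, $\kappa^{+0}=\kappa$, $\kappa^{+(n+1)}=(\kappa^{+n})^+$. *)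

theory Defs
  imports Main
begin

text \<open>d-dimensional tuples are lists of length d.  A d-dimensional k-template
 is a set of k such tuples.\<close>
definition template :: "nat \<Rightarrow> nat \<Rightarrow> 'a list set \<Rightarrow> bool" where
  "template d k P \<longleftrightarrow> (\<forall>x\<in>P. length x = d) \<and> finite P \<and> card P = k"

definition hom_image :: "nat \<Rightarrow> 'b list set \<Rightarrow> 'a list set \<Rightarrow> bool" where
  "hom_image d P Q \<longleftrightarrow> (\<exists>f. f ` P = Q \<and>
      (\<forall>x\<in>P. \<forall>y\<in>P. \<forall>i<d. x ! i = y ! i \<longrightarrow> f x ! i = f y ! i))"

definition prod_tuples :: "nat \<Rightarrow> (nat \<Rightarrow> 'a set) \<Rightarrow> 'a list set" where
  "prod_tuples d X = {x. length x = d \<and> (\<forall>i<d. x ! i \<in> X i)}"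

text \<open>Edge set of the k-hypergraph L(X,P) (its vertex set is prod_tuples d X).\<close>
definition L_edges :: "nat \<Rightarrow> (nat \<Rightarrow> 'a set) \<Rightarrow> 'b list set \<Rightarrow> 'a list set set" where
  "L_edges d X P = {Q. Q \<subseteq> prod_tuples d X \<and> template d (card P) Q \<and> hom_image d P Q}"

definition proper_coloring :: "'v set \<Rightarrow> 'v set set \<Rightarrow> ('v \<Rightarrow> 'c) \<Rightarrow> bool" where
  "proper_coloring V E c \<longleftrightarrow> (\<forall>e\<in>E. \<not> (\<exists>a. \<forall>x\<in>e. c x = a))"

definition chi_ge :: "'v set \<Rightarrow> 'v set set \<Rightarrow> 'k rel \<Rightarrow> 'c itself \<Rightarrow> bool" where
  "chi_ge V E kappa (_::'c itself) \<longleftrightarrow>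
     (\<forall>c::'v \<Rightarrow> 'c. proper_coloring V E c \<longrightarrow> \<not> ((card_of (c ` V), kappa) \<in> ordLess))"

text \<open>succ_pow kappa i r: r is a cardinal (order) isomorphic to kappa^{+i}.\<close>
fun succ_pow :: "'k rel \<Rightarrow> nat \<Rightarrow> 'a rel \<Rightarrow> bool" where
  "succ_pow kappa 0 r = (Card_order r \<and> (r, kappa) \<in> ordIso)"
| "succ_pow kappa (Suc i) r =
     (Card_order r \<and> (\<exists>s::'a rel. succ_pow kappa i s \<and> (r, cardSuc s) \<in> ordIso))"

end

theory Submission
  imports Defs
begin
unbundle cardinal_syntax


lemma fin_inf_less: "finite A \<Longrightarrow> infinite W \<Longrightarrow> |A| <o |W|"
  by (rule finite_ordLess_infinite[OF card_of_Well_order card_of_Well_order]) (auto simp: Field_card_of)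

lemma fin_inf_leq: "finite A \<Longrightarrow> infinite W \<Longrightarrow> |A| \<le>o |W|"
  using fin_inf_less ordLess_imp_ordLeq by blast

lemma succ_pow_card: "succ_pow \<kappa> i r \<Longrightarrow> Card_order r"
  by (cases i) auto

lemma succ_pow_uniq:
  fixes r r' :: "'a rel"
  shows "succ_pow \<kappa> i r \<Longrightarrow> succ_pow \<kappa> i r' \<Longrightarrow> r =o r'"
proof (induction i arbitrary: r r')
  case 0
  then have "r =o \<kappa>" "r' =o \<kappa>" by auto
  then show ?case using ordIso_transitive ordIso_symmetric by metis
next
  case (Suc i)
  from Suc.prems(1) obtain s :: "'a rel" where s: "succ_pow \<kappa> i s" "r =o cardSuc s" by auto
  from Suc.prems(2) obtain s' :: "'a rel" where s': "succ_pow \<kappa> i s'" "r' =o cardSuc s'" by auto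
  have "s =o s'" using Suc.IH s s' by blast
  then have "cardSuc s =o cardSuc s'"
    using cardSuc_invar_ordIso succ_pow_card s s' by blast
  then show ?case using s s' ordIso_transitive ordIso_symmetric by metis
qed

lemma succ_pow_mono:
  fixes r s :: "'a rel"
  shows "succ_pow \<kappa> i r \<Longrightarrow> succ_pow \<kappa> j s \<Longrightarrow> i \<le> j \<Longrightarrow> r \<le>o s"
proof (induction j arbitrary: s)
  case 0
  then show ?case using succ_pow_uniq ordIso_imp_ordLeq by fastforce
next
  case (Suc j)
  show ?case
  proof (cases "i = Suc j")
    case True
    then show ?thesis using Suc.prems succ_pow_uniq ordIso_imp_ordLeq by fastforce
  next
    case False
    from Suc.prems(2) obtain s' :: "'a rel" where s': "succ_pow \<kappa> j s'" "s =o cardSuc s'" by auto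
    have "r \<le>o s'" using Suc.IH Suc.prems False s' by auto
    moreover have "s' <o cardSuc s'" using cardSuc_greater succ_pow_card s' by blast
    ultimately have "r <o cardSuc s'" using ordLeq_ordLess_trans by blast
    then show ?thesis using s' ordLess_imp_ordLeq ordLeq_ordIso_trans ordIso_symmetric by blast
  qed
qed

lemma succ_pow_kappa:
  fixes r :: "'a rel"
  shows "succ_pow \<kappa> i r \<Longrightarrow> \<kappa> \<le>o r"
proof (induction i arbitrary: r)
  case 0
  then show ?case using ordIso_symmetric ordIso_imp_ordLeq by auto
next
  case (Suc i)
  from Suc.prems obtain s :: "'a rel" where s: "succ_pow \<kappa> i s" "r =o cardSuc s" by auto
  have "\<kappa> \<le>o s" using Suc.IH s by blast
  moreover have "s <o cardSuc s" using cardSuc_greater succ_pow_card s by blast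
  ultimately have "\<kappa> <o cardSuc s" using ordLeq_ordLess_trans by blast
  then show ?case using s ordLess_imp_ordLeq ordLeq_ordIso_trans ordIso_symmetric by blast
qed

lemma lists_bound:
  fixes A :: "'x set" and W :: "'y set"
  assumes inf: "infinite W" and le: "|A| \<le>o |W|"
  shows "|lists A| \<le>o |W|"
proof -
  define L where "L m = {xs\<in>lists A. length xs = m}" for m
  have "|L m| \<le>o |W|" for m
  proof (induction m)
    case 0
    have "L 0 = {[]}" unfolding L_def by auto
    then have "finite (L 0)" by simp
    then show ?case using fin_inf_leq inf by blast
  next
    case (Suc m)
    have eq: "L (Suc m) = (\<lambda>(x,xs). x#xs) ` (A \<times> L m)"
    proof (rule set_eqI)
      fix ys
      show "ys \<in> L (Suc m) \<longleftrightarrow> ys \<in> (\<lambda>(x,xs). x#xs) ` (A \<times> L m)"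
        unfolding L_def by (cases ys) force+
    qed
    have "|A \<times> L m| \<le>o |W|"
      using card_of_Sigma_ordLeq_infinite[OF inf le, of "\<lambda>_. L m"] Suc.IH by auto
    then show ?case unfolding eq using card_of_image ordLeq_transitive by blast
  qed
  moreover have eq: "lists A = (\<Union>m\<in>UNIV. L m)" unfolding L_def by auto
  moreover have "natLeq \<le>o |W|" using inf infinite_iff_natLeq_ordLeq by blast
  then have "|UNIV::nat set| \<le>o |W|" using card_of_nat ordIso_ordLeq_trans by blast
  ultimately show ?thesis using card_of_UNION_ordLeq_infinite[OF inf, of UNIV L] by simp
qed

lemma pigeon:
  assumes FD: "F ` A \<subseteq> D" and less: "|D| <o |A|" and inf: "infinite A"
  shows "\<exists>p\<in>D. infinite {y\<in>A. F y = p}"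
proof (rule ccontr)
  assume nt: "\<not> ?thesis"
  define G where "G p = {y\<in>A. F y = p}" for p
  have fin: "\<forall>p\<in>D. finite (G p)" using nt unfolding G_def by blast
  have A_eq: "A = (\<Union>p\<in>D. G p)" using FD unfolding G_def by auto
  show False
  proof (cases "finite D")
    case True
    then have "finite (\<Union>p\<in>D. G p)" using fin by blast
    then show False using inf A_eq by simp
  next
    case False
    have DD: "|D| \<le>o |D|" by (rule ordIso_imp_ordLeq[OF card_of_refl])
    have GD: "\<forall>p\<in>D. |G p| \<le>o |D|"
    proof
      fix p assume "p \<in> D"
      then show "|G p| \<le>o |D|" using fin fin_inf_leq False by blast
    qed
    have "|\<Union>p\<in>D. G p| \<le>o |D|" by (rule card_of_UNION_ordLeq_infinite[OF False DD GD])
    then have "|A| \<le>o |D|" using A_eq by simp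
    then show False using less not_ordLess_ordLeq by blast
  qed
qed

lemma prod_ne: "(\<forall>i<n. B i \<noteq> {}) \<Longrightarrow> map (\<lambda>i. SOME x. x \<in> B i) [0..<n] \<in> prod_tuples n B"
  by (auto simp: prod_tuples_def some_in_eq)

lemma sub_card:
  assumes "Card_order r" "r \<le>o |X|"
  shows "\<exists>Y\<subseteq>X. |Y| =o r"
proof -
  have fr: "|Field r| =o r" using card_of_Field_ordIso[OF assms(1)] .
  have "|Field r| \<le>o |X|" by (rule ordIso_ordLeq_trans[OF fr assms(2)])
  then obtain f where f: "inj_on f (Field r)" "f ` Field r \<subseteq> X"
    unfolding card_of_ordLeq[symmetric] by blast
  have "bij_betw f (Field r) (f ` Field r)" using f(1) by (rule inj_on_imp_bij_betw)
  then have "|Field r| =o |f ` Field r|" unfolding card_of_ordIso[symmetric] by blast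
  then have "|f ` Field r| =o r" by (rule ordIso_transitive[OF ordIso_symmetric fr])
  then show ?thesis using f(2) by blast
qed

lemma ext_tuple:
  assumes "t \<in> prod_tuples n Y" "y \<in> X n" "\<forall>i<n. Y i \<subseteq> X i"
  shows "t @ [y] \<in> prod_tuples (Suc n) X"
  using assms by (auto simp: prod_tuples_def nth_append less_Suc_eq)

lemma box:
  fixes \<kappa> :: "'k rel" and X :: "nat \<Rightarrow> 'a set" and c :: "'a list \<Rightarrow> 'c"
  assumes ck: "Card_order \<kappa>" and nk: "natLeq \<le>o \<kappa>" and k1: "1 \<le> k"
  shows "(\<forall>i<n. \<exists>r::'a rel. succ_pow \<kappa> i r \<and> r \<le>o |X i| ) \<Longrightarrow> |c ` prod_tuples n X| <o \<kappa>
    \<Longrightarrow> \<exists>B. (\<forall>i<n. B i \<subseteq> X i \<and> finite (B i) \<and> card (B i) = k) \<and> (\<forall>i\<ge>n. B i = {})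
        \<and> (\<exists>a. \<forall>x\<in>prod_tuples n B. c x = a)"
proof (induction n arbitrary: X c)
  case 0
  show ?case by (rule exI[of _ "\<lambda>_. {}"]) (auto simp: prod_tuples_def)
next
  case (Suc n)
  note hyp = Suc.prems(1) and col = Suc.prems(2)
  obtain rn :: "'a rel" where rn: "succ_pow \<kappa> n rn" "rn \<le>o |X n|" using hyp by auto
  have "\<forall>i<n. \<exists>Yi. Yi \<subseteq> X i \<and> (\<exists>r::'a rel. succ_pow \<kappa> i r \<and> |Yi| =o r)"
  proof (intro allI impI)
    fix i assume "i < n"
    then obtain r :: "'a rel" where r: "succ_pow \<kappa> i r" "r \<le>o |X i|" using hyp less_SucI by blast
    then obtain Yi where "Yi \<subseteq> X i" "|Yi| =o r" using sub_card[OF succ_pow_card[OF r(1)] r(2)] by blast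
    then show "\<exists>Yi. Yi \<subseteq> X i \<and> (\<exists>r::'a rel. succ_pow \<kappa> i r \<and> |Yi| =o r)" using r by blast
  qed
  then obtain Y where Y: "\<forall>i<n. Y i \<subseteq> X i \<and> (\<exists>r::'a rel. succ_pow \<kappa> i r \<and> |Y i| =o r)"
    by (subst (asm) choice_iff') blast
  have YX: "\<forall>i<n. Y i \<subseteq> X i" using Y by blast
  have hypY: "\<forall>i<n. \<exists>r::'a rel. succ_pow \<kappa> i r \<and> r \<le>o |Y i|"
  proof (intro allI impI)
    fix i assume "i < n"
    then obtain r :: "'a rel" where "succ_pow \<kappa> i r" "|Y i| =o r" using Y by blast
    then show "\<exists>r::'a rel. succ_pow \<kappa> i r \<and> r \<le>o |Y i|"
      using ordIso_imp_ordLeq[OF ordIso_symmetric] by blast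
  qed
  define C where "C = c ` prod_tuples (Suc n) X"
  have CK: "|C| <o \<kappa>" using col C_def by simp
  have "\<forall>y\<in>X n. \<exists>B. \<exists>a. (\<forall>i<n. B i \<subseteq> Y i \<and> finite (B i) \<and> card (B i) = k) \<and> (\<forall>i\<ge>n. B i = {})
        \<and> (\<forall>x\<in>prod_tuples n B. c (x @ [y]) = a)"
  proof
    fix y assume y: "y \<in> X n"
    have sub: "(\<lambda>t. c (t @ [y])) ` prod_tuples n Y \<subseteq> C"
      using ext_tuple[OF _ y YX] C_def by auto
    have "|(\<lambda>t. c (t @ [y])) ` prod_tuples n Y| <o \<kappa>"
      by (rule ordLeq_ordLess_trans[OF card_of_mono1[OF sub] CK])
    from Suc.IH[OF hypY this]
    show "\<exists>B. \<exists>a. (\<forall>i<n. B i \<subseteq> Y i \<and> finite (B i) \<and> card (B i) = k) \<and> (\<forall>i\<ge>n. B i = {})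
        \<and> (\<forall>x\<in>prod_tuples n B. c (x @ [y]) = a)" by blast
  qed
  then obtain B where "\<forall>y\<in>X n. \<exists>a. (\<forall>i<n. B y i \<subseteq> Y i \<and> finite (B y i) \<and> card (B y i) = k) \<and> (\<forall>i\<ge>n. B y i = {})
        \<and> (\<forall>x\<in>prod_tuples n (B y). c (x @ [y]) = a)"
    by (rule bchoice[elim_format]) blast
  then obtain a where Ba: "\<forall>y\<in>X n. (\<forall>i<n. B y i \<subseteq> Y i \<and> finite (B y i) \<and> card (B y i) = k) \<and> (\<forall>i\<ge>n. B y i = {})
        \<and> (\<forall>x\<in>prod_tuples n (B y). c (x @ [y]) = a y)"
    by (rule bchoice[elim_format]) blast
  define S where "S = {B. (\<forall>i<n. B i \<subseteq> Y i \<and> finite (B i)) \<and> (\<forall>i\<ge>n. B i = {})}"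
  define F where "F y = (B y, a y)" for y
  have FD: "F ` X n \<subseteq> S \<times> C"
  proof
    fix z assume "z \<in> F ` X n"
    then obtain y where y: "y \<in> X n" "z = F y" by blast
    have BS: "B y \<in> S" using Ba y(1) unfolding S_def by blast
    have ne: "\<forall>i<n. B y i \<noteq> {}" using Ba y(1) k1 by fastforce
    define x0 where "x0 = map (\<lambda>i. SOME x. x \<in> B y i) [0..<n]"
    have x0: "x0 \<in> prod_tuples n (B y)" using prod_ne[OF ne] x0_def by simp
    have "x0 \<in> prod_tuples n Y" using x0 Ba y(1) unfolding prod_tuples_def by blast
    then have "c (x0 @ [y]) \<in> C" using ext_tuple[OF _ y(1) YX] C_def by blast
    moreover have "c (x0 @ [y]) = a y" using Ba y(1) x0 by blast
    ultimately show "z \<in> S \<times> C" using BS y(2) F_def by simp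
  qed
  have rnX: "\<kappa> \<le>o |X n|" by (rule ordLeq_transitive[OF succ_pow_kappa[OF rn(1)] rn(2)])
  have card: "|S \<times> C| <o |X n|"
  proof (cases n)
    case 0
    have "S = {\<lambda>_. {}}" unfolding S_def 0 by auto
    then have eq: "S \<times> C = (\<lambda>a. (\<lambda>_. {}, a)) ` C" by auto
    have "|S \<times> C| \<le>o |C|" unfolding eq by (rule card_of_image)
    then show ?thesis by (rule ordLess_ordLeq_trans[OF ordLeq_ordLess_trans[OF _ CK] rnX])
  next
    case (Suc m)
    from rn(1) obtain s :: "'a rel" where s: "succ_pow \<kappa> m s" "rn =o cardSuc s" using Suc by auto
    have cs: "Card_order s" by (rule succ_pow_card[OF s(1)])
    define W where "W = Field s"
    have Ws: "|W| =o s" unfolding W_def by (rule card_of_Field_ordIso[OF cs])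
    have ks: "\<kappa> \<le>o s" by (rule succ_pow_kappa[OF s(1)])
    have sW: "s \<le>o |W|" by (rule ordIso_imp_ordLeq[OF ordIso_symmetric[OF Ws]])
    have Wsl: "|W| \<le>o s" by (rule ordIso_imp_ordLeq[OF Ws])
    have "natLeq \<le>o |W|"
      by (rule ordLeq_transitive[OF ordLeq_transitive[OF nk ks] sW])
    then have infW: "infinite W" using infinite_iff_natLeq_ordLeq by blast
    define Z where "Z = (\<Union>i\<in>{..<n}. Y i)"
    have YW: "\<forall>i\<in>{..<n}. |Y i| \<le>o |W|"
    proof
      fix i assume "i \<in> {..<n}"
      then obtain r :: "'a rel" where r: "succ_pow \<kappa> i r" "|Y i| =o r" using Y by auto
      have "i \<le> m" using \<open>i \<in> {..<n}\<close> Suc by auto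
      then have "r \<le>o s" by (rule succ_pow_mono[OF r(1) s(1)])
      then show "|Y i| \<le>o |W|"
        by (rule ordIso_ordLeq_trans[OF r(2) ordLeq_transitive[OF _ sW]])
    qed
    have ZW: "|Z| \<le>o |W|" unfolding Z_def
      using card_of_UNION_ordLeq_infinite[OF infW fin_inf_leq[OF finite_lessThan infW] YW] .
    have "Fpow Z \<subseteq> set ` lists Z"
    proof
      fix A assume "A \<in> Fpow Z"
      then obtain xs where "set xs = A" "A \<subseteq> Z" using finite_list unfolding Fpow_def by blast
      then show "A \<in> set ` lists Z" by auto
    qed
    then have "|Fpow Z| \<le>o |lists Z|"
      by (rule ordLeq_transitive[OF card_of_mono1 card_of_image])
    then have FW: "|Fpow Z| \<le>o |W|" by (rule ordLeq_transitive[OF _ lists_bound[OF infW ZW]])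
    have "inj_on (\<lambda>B. map B [0..<n]) S"
    proof (rule inj_onI)
      fix B1 B2 assume "B1 \<in> S" "B2 \<in> S" "map B1 [0..<n] = map B2 [0..<n]"
      then show "B1 = B2" unfolding S_def by (auto simp: map_eq_conv fun_eq_iff)
    qed
    moreover have "(\<lambda>B. map B [0..<n]) ` S \<subseteq> lists (Fpow Z)"
      unfolding S_def Z_def Fpow_def by (auto simp: subset_iff) blast
    ultimately have "|S| \<le>o |lists (Fpow Z)|" unfolding card_of_ordLeq[symmetric] by blast
    then have S1: "|S| \<le>o s"
      by (rule ordLeq_transitive[OF _ ordLeq_transitive[OF lists_bound[OF infW FW] Wsl]])
    have C1: "|C| \<le>o s" by (rule ordLess_imp_ordLeq[OF ordLess_ordLeq_trans[OF CK ks]])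
    have "infinite (Field s)" using infW W_def by simp
    then have "|S \<times> C| \<le>o s" by (rule card_of_Times_ordLeq_infinite_Field[OF _ S1 C1 cs])
    then have "|S \<times> C| <o cardSuc s" by (rule ordLeq_ordLess_trans[OF _ cardSuc_greater[OF cs]])
    then have "|S \<times> C| <o rn" by (rule ordLess_ordIso_trans[OF _ ordIso_symmetric[OF s(2)]])
    then show ?thesis by (rule ordLess_ordLeq_trans[OF _ rn(2)])
  qed
  have "natLeq \<le>o |X n|" by (rule ordLeq_transitive[OF nk rnX])
  then have infX: "infinite (X n)" using infinite_iff_natLeq_ordLeq by blast
  obtain p where p: "p \<in> S \<times> C" "infinite {y\<in>X n. F y = p}" using pigeon[OF FD card infX] by blast
  obtain T where T: "finite T" "card T = k" "T \<subseteq> {y\<in>X n. F y = p}"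
    using infinite_arbitrarily_large[OF p(2)] by blast
  obtain B0 a0 where p0: "p = (B0, a0)" by (cases p)
  have "T \<noteq> {}" using T k1 by auto
  then obtain y0 where y0: "y0 \<in> T" by blast
  have y0X: "y0 \<in> X n" "B y0 = B0" "a y0 = a0" using T y0 p0 F_def by auto
  define B' where "B' = B0(n := T)"
  show ?case
  proof (intro exI conjI allI impI)
    fix i assume i: "i < Suc n"
    have By0: "\<forall>i<n. B y0 i \<subseteq> Y i \<and> finite (B y0 i) \<and> card (B y0 i) = k" using Ba y0X(1) by blast
    have TX: "T \<subseteq> X n" using T(3) by blast
    have "B' i \<subseteq> X i \<and> finite (B' i) \<and> card (B' i) = k"
    proof (cases "i = n")
      case True
      then show ?thesis unfolding B'_def using TX T by simp
    next
      case False
      then have "i < n" using i by simp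
      then show ?thesis unfolding B'_def using False By0 YX y0X(2) by (auto dest!: spec[of _ i])
    qed
    then show "B' i \<subseteq> X i" "finite (B' i)" "card (B' i) = k" by auto
  next
    fix i assume "Suc n \<le> i"
    then show "B' i = {}" using Ba y0X unfolding B'_def by auto
  next
    show "\<forall>x\<in>prod_tuples (Suc n) B'. c x = a0"
    proof
      fix x assume x: "x \<in> prod_tuples (Suc n) B'"
      define t where "t = take n x"
      define y where "y = x ! n"
      have len: "length x = Suc n" using x prod_tuples_def by auto
      have xe: "x = t @ [y]" unfolding t_def y_def using len
        by (metis lessI take_Suc_conv_app_nth take_all order_refl)
      have "y \<in> T" using x unfolding y_def B'_def prod_tuples_def by auto
      then have yy: "y \<in> X n" "B y = B0" "a y = a0" using T p0 F_def by auto
      have "t \<in> prod_tuples n (B y)"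
        unfolding t_def prod_tuples_def
      proof (intro CollectI conjI allI impI)
        show "length (take n x) = n" using len by simp
        fix i assume "i < n"
        then have "x ! i \<in> B' i" using x unfolding prod_tuples_def by auto
        then show "take n x ! i \<in> B y i" using \<open>i < n\<close> yy(2) unfolding B'_def by simp
      qed
      then have "c (t @ [y]) = a y" using Ba yy(1) by blast
      then show "c x = a0" using xe yy by simp
    qed
  qed
qed

theorem lemma1p2:
  fixes kappa :: "'k rel" and d k :: nat and P :: "'b list set"
    and X :: "nat \<Rightarrow> 'a set"
  assumes "1 \<le> d" and "2 \<le> k"
    and "Card_order kappa" and "(natLeq, kappa) \<in> ordLeq"
    and "template d k P"
    and "\<forall>i<d. \<exists>r::'a rel. succ_pow kappa i r \<and> (r, card_of (X i)) \<in> ordLeq"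
  shows "chi_ge (prod_tuples d X) (L_edges d X P) kappa TYPE('c)"
  unfolding chi_ge_def
proof (intro allI impI notI)
  fix c :: "'a list \<Rightarrow> 'c"
  assume proper: "proper_coloring (prod_tuples d X) (L_edges d X P) c"
    and less: "|c ` prod_tuples d X| <o kappa"
  have Pd: "\<forall>x\<in>P. length x = d" "finite P" "card P = k" using assms(5) template_def by auto
  obtain B where B: "\<forall>i<d. B i \<subseteq> X i \<and> finite (B i) \<and> card (B i) = k"
      and mono: "\<exists>a. \<forall>x\<in>prod_tuples d B. c x = a"
    using box[OF assms(3) assms(4), of k d X c] assms(2,6) less by auto
  define A where "A i = (\<lambda>x. x ! i) ` P" for i
  have "\<forall>i<d. \<exists>g. g ` A i \<subseteq> B i \<and> inj_on g (A i)"
  proof (intro allI impI)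
    fix i assume i: "i < d"
    have "card (A i) \<le> card P" unfolding A_def by (rule card_image_le[OF Pd(2)])
    then have "card (A i) \<le> card (B i)" using Pd(3) B i by simp
    then show "\<exists>g. g ` A i \<subseteq> B i \<and> inj_on g (A i)"
      using card_le_inj[of "A i" "B i"] Pd(2) B i unfolding A_def by blast
  qed
  then obtain g where g: "\<forall>i<d. g i ` A i \<subseteq> B i \<and> inj_on (g i) (A i)" by metis
  define f where "f x = map (\<lambda>i. g i (x ! i)) [0..<d]" for x
  define Q where "Q = f ` P"
  have fB: "f x \<in> prod_tuples d B" if "x \<in> P" for x
    using that g unfolding f_def prod_tuples_def A_def by auto
  have injf: "inj_on f P"
  proof (rule inj_onI)
    fix x y assume xy: "x \<in> P" "y \<in> P" "f x = f y"
    have "\<forall>i<d. x ! i = y ! i"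
    proof (intro allI impI)
      fix i assume i: "i < d"
      have "g i (x ! i) = g i (y ! i)" using xy(3) i unfolding f_def
        by (metis (no_types, lifting) add_0 diff_zero length_upt nth_map nth_upt)
      moreover have "x ! i \<in> A i" "y ! i \<in> A i" using xy unfolding A_def by auto
      ultimately show "x ! i = y ! i" using g i by (meson inj_onD)
    qed
    then show "x = y" by (intro nth_equalityI) (use xy Pd(1) in auto)
  qed
  have QB: "Q \<subseteq> prod_tuples d B" using fB Q_def by auto
  have QX: "Q \<subseteq> prod_tuples d X" using QB B unfolding prod_tuples_def by blast
  have "template d (card P) Q"
    unfolding template_def Q_def using fB Pd injf card_image
    by (auto simp: prod_tuples_def)
  moreover have "hom_image d P Q"
    unfolding hom_image_def Q_def by (rule exI[of _ f]) (auto simp: f_def)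
  ultimately have QE: "Q \<in> L_edges d X P" using QX unfolding L_edges_def by simp
  have "\<not> (\<exists>a. \<forall>x\<in>Q. c x = a)" using proper QE unfolding proper_coloring_def by blast
  moreover obtain a where "\<forall>x\<in>prod_tuples d B. c x = a" using mono by blast
  ultimately show False using QB by blast
qed

end
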